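(* Consider the stochastic energy exchange model and the notation of the context. For every sufficiently small $\eta>0$ there is a constant $C>0$ depending on $N$ and $\eta$ such that for every $\mathbf{E}\in\mathbb{R}^N_+$, $1\le n\le N$ and $1\le k\le N-n+1$, $$\mathbb{E}_{\mathbf{E}}\big[V_{n,k}(\mathbf{E}_{\tau_1^+})\mid\mathcal{C}_k(\tau_1)\big]\le C\,V_{n,k}(\mathbf{E})\quad\text{and}\quad \mathbb{E}_{\mathbf{E}}\big[V_{n,k}(\mathbf{E}_{\tau_1^+})\mid\mathcal{C}_{k+n}(\tau_1)\big]\le C\,V_{n,k}(\mathbf{E}).$$
   Context: Fix $N\ge1$, $T_L,T_R>0$, a sufficiently large $K$ ($K\gg T_L,T_R$) and $R(a,b)=\min\{K,\sqrt{\min(a,b)}\}$. Write $E_0:=T_L$, $E_{N+1}:=T_R$. The stochastic energy exchange model is the Markov jump process $\mathbf{E}_t=(E_1(t),\dots,E_N(t))$ on $\mathbb{R}^N_+$ with independent exponential clocks $i=1,\dots,N+1$, clock $i$ having rate $R_i=R(E_{i-1},E_i)$. When clock $i$ with $2\le i\le N$ rings, $(E_{i-1},E_i)\mapsto(p(E_{i-1}+E_i),(1-p)(E_{i-1}+E_i))$, $p$ uniform on $(0,1)$; when clock $1$ (resp. $N+1$) rings, $E_1\mapsto p(E_1+X_L)$ (resp. $E_N\mapsto p(E_N+X_R)$), $X_L,X_R$ exponential with means $T_L,T_R$; all randomness independent. Let $\tau_1$ be the time of the first clock ring, $\mathcal{C}_i(\tau_1)$ the event that the ring at $\tau_1$ is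 clock $i$, $\mathbf{E}_{\tau_1^+}$ the configuration immediately after that ring, and $\mathbb{E}_{\mathbf{E}}$ expectation with $\mathbf{E}_0=\mathbf{E}$. Let $a_m=1-\frac{2^{m-1}-1}{2^N-1}$ and $V_{n,k}(\mathbf{E})=\big(\sum_{j=0}^{n-1}E_{k+j}\big)^{a_n\eta-1}$. *)

theory Defs
  imports "HOL-Probability.Probability"
begin

text \<open>Configurations are functions nat => real; only the coordinates 1..N matter.\<close>

definition a_coef :: "nat \<Rightarrow> nat \<Rightarrow> real" where
  "a_coef N m = 1 - (2 ^ (m - 1) - 1) / (2 ^ N - 1)"

definition V :: "nat \<Rightarrow> real \<Rightarrow> nat \<Rightarrow> nat \<Rightarrow> (nat \<Rightarrow> real) \<Rightarrow> real" where
  "V N \<eta> n k E = (\<Sum>j<n. E (k + j)) powr (a_coef N n * \<eta> - 1)"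

text \<open>Configuration right after clock i rings from configuration E, given the
  uniform variable p and (for boundary clocks) the exponential variable x.\<close>
definition jump :: "nat \<Rightarrow> nat \<Rightarrow> (nat \<Rightarrow> real) \<Rightarrow> real \<Rightarrow> real \<Rightarrow> (nat \<Rightarrow> real)" where
  "jump N i E p x =
     (if i = 1 then E(1 := p * (E 1 + x))
      else if i = N + 1 then E(N := p * (E N + x))
      else E(i - 1 := p * (E (i - 1) + E i), i := (1 - p) * (E (i - 1) + E i)))"

text \<open>Conditional expectation of f(E_{tau_1^+}) given that the first ring is clock i,
  started at E: integral over p uniform on (0,1) and the (independent) exponential
  bath variable X_L (mean T_L) for i = 1, X_R (mean T_R) for i = N+1.\<close>
definition cond_exp_after_ring ::
  "nat \<Rightarrow> real \<Rightarrow> real \<Rightarrow> nat \<Rightarrow> ((nat \<Rightarrow> real) \<Rightarrow> real) \<Rightarrow> (nat \<Rightarrow> real) \<Rightarrow> ennreal" where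
  "cond_exp_after_ring N TL TR i f E =
     (if i = 1 \<or> i = N + 1 then
        (\<integral>\<^sup>+ p. indicator {0<..<1} p *
           (\<integral>\<^sup>+ x. ennreal (exponential_density (1 / (if i = 1 then TL else TR)) x)
                    * ennreal (f (jump N i E p x)) \<partial>lborel) \<partial>lborel)
      else
        (\<integral>\<^sup>+ p. indicator {0<..<1} p * ennreal (f (jump N i E p 0)) \<partial>lborel))"

end

theory Submission imports Defs begin

lemma W1:
  assumes "-1 < b"
  shows "(\<integral>\<^sup>+p. ennreal (p powr b) * indicator {0..1} p \<partial>lborel) = ennreal (1/(b+1))"
proof -
  have "((\<lambda>x. x powr b) has_integral (1 powr (b+1) / (b+1))) {0..1}"
    using has_integral_powr_from_0[OF assms, of 1] by simp
  hence "((\<lambda>x. x powr b) has_integral (1/(b+1))) {0..1}" by simp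
  from nn_integral_has_integral_lebesgue'[OF _ this] show ?thesis by simp
qed

lemma W2:
  assumes "-1 < b"
  shows "(\<integral>\<^sup>+p. ennreal ((1-p) powr b) * indicator {0..1} p \<partial>lborel) = ennreal (1/(b+1))"
proof -
  have "((\<lambda>x. x powr b) has_integral (1/(b+1))) {0..1}"
    using has_integral_powr_from_0[OF assms, of 1] by simp
  hence "((\<lambda>x. (\<lambda>y. y powr b) (-x)) has_integral (1/(b+1))) {-1..-0}"
    by (subst has_integral_reflect_real) simp
  hence "((\<lambda>x. (-x) powr b) has_integral (1/(b+1))) {-1..0}" by simp
  hence "((\<lambda>x. (-(1 *\<^sub>R x + (-1))) powr b) has_integral ((1/(b+1)) /\<^sub>R 1 ^ DIM(real)))
     (cbox ((-1 - (-1)) /\<^sub>R 1) ((0 - (-1)) /\<^sub>R 1))"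
    by (intro has_integral_affinity') auto
  hence "((\<lambda>x. (1-x) powr b) has_integral (1/(b+1))) {0..1}" by simp
  from nn_integral_has_integral_lebesgue'[OF _ this] show ?thesis by simp
qed

lemma Dens:
  assumes "0 < l"
  shows "(\<integral>\<^sup>+x. ennreal (exponential_density l x) \<partial>lborel) = 1"
proof -
  interpret prob_space "density lborel (exponential_density l)"
    using prob_space_exponential_density[OF assms] .
  have "emeasure (density lborel (exponential_density l)) UNIV = 1"
    using emeasure_space_1 by simp
  thus ?thesis by (simp add: emeasure_density)
qed

lemma L1:
  fixes F :: "real \<Rightarrow> ennreal"
  assumes bnd: "\<And>p. 0 < p \<Longrightarrow> p < 1 \<Longrightarrow> F p \<le> ennreal (w p * s)"
    and wpos: "\<And>p. 0 \<le> w p" and wm: "w \<in> borel_measurable borel" and s: "0 \<le> s"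
    and int: "(\<integral>\<^sup>+p. ennreal (w p) * indicator {0..1} p \<partial>lborel) = ennreal c"
    and c: "0 \<le> c"
  shows "(\<integral>\<^sup>+p. indicator {0<..<1} p * F p \<partial>lborel) \<le> ennreal (s * c)"
proof -
  have "(\<integral>\<^sup>+p. indicator {0<..<1} p * F p \<partial>lborel)
      \<le> (\<integral>\<^sup>+p. (ennreal (w p) * indicator {0..1} p) * ennreal s \<partial>lborel)"
  proof (rule nn_integral_mono)
    fix p :: real
    show "indicator {0<..<1} p * F p \<le> (ennreal (w p) * indicator {0..1} p) * ennreal s"
    proof (cases "0 < p \<and> p < 1")
      case True
      then show ?thesis using bnd[of p] wpos[of p] s by (simp add: ennreal_mult)
    qed simp
  qed
  also have "\<dots> = (\<integral>\<^sup>+p. ennreal (w p) * indicator {0..1} p \<partial>lborel) * ennreal s"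
    by (rule nn_integral_multc) (use wm in measurable)
  also have "\<dots> = ennreal (s * c)" using int s c by (simp add: ennreal_mult mult.commute)
  finally show ?thesis .
qed

lemma L2:
  assumes l: "0 < l" and g: "\<And>x. 0 \<le> x \<Longrightarrow> g x \<le> B" and B: "0 \<le> B"
  shows "(\<integral>\<^sup>+x. ennreal (exponential_density l x) * ennreal (g x) \<partial>lborel) \<le> ennreal B"
proof -
  have "(\<integral>\<^sup>+x. ennreal (exponential_density l x) * ennreal (g x) \<partial>lborel)
      \<le> (\<integral>\<^sup>+x. ennreal (exponential_density l x) * ennreal B \<partial>lborel)"
  proof (rule nn_integral_mono)
    fix x :: real
    show "ennreal (exponential_density l x) * ennreal (g x) \<le> ennreal (exponential_density l x) * ennreal B"
    proof (cases "0 \<le> x")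
      case True
      then show ?thesis using g[of x] by (intro mult_left_mono ennreal_leI) auto
    qed (simp add: exponential_density_def)
  qed
  also have "\<dots> = (\<integral>\<^sup>+x. ennreal (exponential_density l x) \<partial>lborel) * ennreal B"
    by (rule nn_integral_multc) measurable
  also have "\<dots> = ennreal B" using Dens[OF l] by simp
  finally show ?thesis .
qed

lemma key:
  fixes E E' :: "nat \<Rightarrow> real"
  assumes b: "b \<le> 0" and S: "0 < (\<Sum>j<n. E (k+j))" and q: "0 < q"
    and h: "\<And>j. j < n \<Longrightarrow> q * E (k+j) \<le> E' (k+j)"
  shows "(\<Sum>j<n. E' (k+j)) powr b \<le> q powr b * (\<Sum>j<n. E (k+j)) powr b"
proof -
  have "q * (\<Sum>j<n. E (k+j)) \<le> (\<Sum>j<n. E' (k+j))"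
    unfolding sum_distrib_left by (rule sum_mono) (use h in auto)
  moreover have "0 < q * (\<Sum>j<n. E (k+j))" using S q by simp
  ultimately have "(\<Sum>j<n. E' (k+j)) powr b \<le> (q * (\<Sum>j<n. E (k+j))) powr b"
    by (intro powr_mono2' b) auto
  also have "\<dots> = q powr b * (\<Sum>j<n. E (k+j)) powr b"
    using S q by (simp add: powr_mult)
  finally show ?thesis .
qed

lemma a_bounds:
  assumes "1 \<le> n" "n \<le> N"
  shows "1/2 \<le> a_coef N n" "a_coef N n \<le> 1"
proof -
  have p1: "(1::real) \<le> 2 ^ (n-1)" by simp
  have p2: "(2::real) ^ (n-1) \<le> 2 ^ (N-1)" by (rule power_increasing) (use assms in auto)
  have p3: "(2::real) ^ N = 2 * 2 ^ (N-1)" using assms by (cases N) auto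
  have p4: "(1::real) \<le> 2 ^ (N-1)" by simp
  have d: "(0::real) < 2 ^ N - 1" using p3 p4 by linarith
  have "(2 ^ (n - 1) - 1) / (2 ^ N - 1) \<le> (1::real)/2"
  proof -
    have e: "1/2 * (2^N - (1::real)) = 2^(N-1) - 1/2" using p3 by simp
    have q: "2^(n-1) - 1 \<le> 1/2 * (2^N - (1::real))" unfolding e using p2 by linarith
    thus ?thesis using d by (simp add: divide_le_eq)
  qed
  thus "1/2 \<le> a_coef N n" unfolding a_coef_def by simp
  have "0 \<le> (2 ^ (n - 1) - 1) / (2 ^ N - (1::real))" using d p1 by simp
  thus "a_coef N n \<le> 1" unfolding a_coef_def by simp
qed

lemma unch: "0 < (e::real) \<Longrightarrow> q \<le> 1 \<Longrightarrow> q * e \<le> e"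
  using mult_right_mono[of q 1 e] by simp

lemma grow: "0 \<le> (q::real) \<Longrightarrow> 0 \<le> y \<Longrightarrow> q * e \<le> q * (e + y)"
  by (simp add: mult_left_mono)

lemma jump1: "jump N 1 E p x = E(1 := p * (E 1 + x))"
  by (simp add: jump_def)

lemma jumpR: "N \<noteq> 0 \<Longrightarrow> jump N (N+1) E p x = E(N := p * (E N + x))"
  by (simp add: jump_def)

lemma jumpI: "i \<noteq> 1 \<Longrightarrow> i \<noteq> N + 1 \<Longrightarrow>
   jump N i E p x = E(i - 1 := p * (E (i - 1) + E i), i := (1 - p) * (E (i - 1) + E i))"
  by (simp add: jump_def)

theorem corollary4p3:
  fixes N :: nat and TL TR :: real
  assumes "N \<ge> 1" and "TL > 0" and "TR > 0"
  shows "\<exists>\<eta>0>0. \<forall>\<eta>. 0 < \<eta> \<and> \<eta> < \<eta>0 \<longrightarrow>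
           (\<exists>C>0. \<forall>(E :: nat \<Rightarrow> real) n k.
              (\<forall>j\<in>{1..N}. E j > 0) \<and> 1 \<le> n \<and> n \<le> N \<and> 1 \<le> k \<and> k \<le> N - n + 1 \<longrightarrow>
                cond_exp_after_ring N TL TR k (V N \<eta> n k) E \<le> ennreal (C * V N \<eta> n k E) \<and>
                cond_exp_after_ring N TL TR (k + n) (V N \<eta> n k) E \<le> ennreal (C * V N \<eta> n k E))"
proof (rule exI[of _ 1], intro conjI allI impI)
  fix \<eta> :: real
  assume "0 < \<eta> \<and> \<eta> < 1"
  hence eta: "0 < \<eta>" "\<eta> < 1" by auto
  show "\<exists>C>0. \<forall>(E :: nat \<Rightarrow> real) n k.
              (\<forall>j\<in>{1..N}. E j > 0) \<and> 1 \<le> n \<and> n \<le> N \<and> 1 \<le> k \<and> k \<le> N - n + 1 \<longrightarrow>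
                cond_exp_after_ring N TL TR k (V N \<eta> n k) E \<le> ennreal (C * V N \<eta> n k E) \<and>
                cond_exp_after_ring N TL TR (k + n) (V N \<eta> n k) E \<le> ennreal (C * V N \<eta> n k E)"
  proof (intro exI[of _ "2/\<eta>"] conjI allI impI)
    show "0 < 2/\<eta>" using eta by simp
    fix E :: "nat \<Rightarrow> real" and n k :: nat
    assume H: "(\<forall>j\<in>{1..N}. E j > 0) \<and> 1 \<le> n \<and> n \<le> N \<and> 1 \<le> k \<and> k \<le> N - n + 1"
    hence Epos: "\<And>j. 1 \<le> j \<Longrightarrow> j \<le> N \<Longrightarrow> 0 < E j" and n1: "1 \<le> n" and nN: "n \<le> N"
      and k1: "1 \<le> k" and kn: "k + n \<le> N + 1" by auto
    define a where "a = a_coef N n"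
    define b where "b = a * \<eta> - 1"
    define S where "S = (\<Sum>j<n. E (k+j))"
    have a: "1/2 \<le> a" "a \<le> 1" using a_bounds[OF n1 nN] by (auto simp: a_def)
    have "a * \<eta> \<le> 1 * 1" using a eta by (intro mult_mono) auto
    moreover have "0 < a * \<eta>" using a eta by simp
    ultimately have b: "-1 < b" "b \<le> 0" unfolding b_def by auto
    have Spos: "0 < S" unfolding S_def
    proof (rule sum_pos)
      show "{..<n} \<noteq> {}" using n1 by (metis empty_iff lessThan_iff less_le_trans zero_less_one)
      show "\<And>j. j \<in> {..<n} \<Longrightarrow> 0 < E (k + j)" using Epos k1 kn by auto
    qed simp
    have Vdef: "\<And>E'. V N \<eta> n k E' = (\<Sum>j<n. E' (k+j)) powr b"
      unfolding V_def b_def a_def ..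
    have c: "1/(b+1) \<le> 2/\<eta>" using a eta unfolding b_def by (simp add: divide_simps)
    have fin: "ennreal (S powr b * (1/(b+1))) \<le> ennreal (2/\<eta> * V N \<eta> n k E)"
      unfolding Vdef S_def[symmetric]
    proof (intro ennreal_leI)
      have "S powr b * (1/(b+1)) \<le> S powr b * (2/\<eta>)" by (rule mult_left_mono[OF c]) simp
      thus "S powr b * (1/(b+1)) \<le> 2/\<eta> * S powr b" by (simp add: mult.commute)
    qed
    have c0: "0 \<le> 1/(b+1)" using b by simp
    have wm1: "(\<lambda>p::real. p powr b) \<in> borel_measurable borel" by measurable
    have wm2: "(\<lambda>p::real. (1-p) powr b) \<in> borel_measurable borel" by measurable
    have bdry: "(\<integral>\<^sup>+p. indicator {0<..<1} p *
           (\<integral>\<^sup>+ x. ennreal (exponential_density l x)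
                    * ennreal (V N \<eta> n k (jump N i E p x)) \<partial>lborel) \<partial>lborel) \<le> ennreal (2/\<eta> * V N \<eta> n k E)"
      if l: "0 < l" and hj: "\<And>p x j. 0 < p \<Longrightarrow> p < 1 \<Longrightarrow> 0 \<le> x \<Longrightarrow> j < n \<Longrightarrow> p * E (k+j) \<le> jump N i E p x (k+j)"
      for l i
    proof -
      have "(\<integral>\<^sup>+p. indicator {0<..<1} p *
           (\<integral>\<^sup>+ x. ennreal (exponential_density l x)
                    * ennreal (V N \<eta> n k (jump N i E p x)) \<partial>lborel) \<partial>lborel) \<le> ennreal (S powr b * (1/(b+1)))"
      proof (rule L1[OF _ _ wm1 _ W1[OF b(1)] c0])
        fix p :: real assume p: "0 < p" "p < 1"
        show "(\<integral>\<^sup>+ x. ennreal (exponential_density l x)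
                    * ennreal (V N \<eta> n k (jump N i E p x)) \<partial>lborel) \<le> ennreal (p powr b * S powr b)"
        proof (rule L2[OF l])
          fix x :: real assume "0 \<le> x"
          show "V N \<eta> n k (jump N i E p x) \<le> p powr b * S powr b"
            unfolding Vdef S_def
            by (rule key[OF b(2) Spos[unfolded S_def] p(1)]) (rule hj[OF p \<open>0 \<le> x\<close>])
        qed simp
      qed (auto simp: Spos less_imp_le)
      from order_trans[OF this fin] show ?thesis .
    qed
    have inter: "(\<integral>\<^sup>+p. indicator {0<..<1} p * ennreal (V N \<eta> n k (jump N i E p 0)) \<partial>lborel)
         \<le> ennreal (2/\<eta> * V N \<eta> n k E)"
      if W: "(\<integral>\<^sup>+p. ennreal (w p) * indicator {0..1} p \<partial>lborel) = ennreal (1/(b+1))"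
        and wm: "w \<in> borel_measurable borel" and wq: "\<And>p. 0 < p \<Longrightarrow> p < 1 \<Longrightarrow> w p = q p powr b \<and> 0 < q p"
        and hj: "\<And>p j. 0 < p \<Longrightarrow> p < 1 \<Longrightarrow> j < n \<Longrightarrow> q p * E (k+j) \<le> jump N i E p 0 (k+j)"
      for w q i
    proof -
      have "(\<integral>\<^sup>+p. indicator {0<..<1} p * ennreal (V N \<eta> n k (jump N i E p 0)) \<partial>lborel)
         \<le> ennreal (S powr b * (1/(b+1)))"
      proof (rule L1[where w="\<lambda>p. max 0 (w p)", OF _ _ _ _ _ c0])
        fix p :: real assume p: "0 < p" "p < 1"
        have "V N \<eta> n k (jump N i E p 0) \<le> q p powr b * S powr b"
          unfolding Vdef S_def
          by (rule key[OF b(2) Spos[unfolded S_def]]) (use wq[OF p] hj[OF p] in auto)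
        thus "ennreal (V N \<eta> n k (jump N i E p 0)) \<le> ennreal (max 0 (w p) * S powr b)"
          using wq[OF p] by (intro ennreal_leI) simp
      next
        show "(\<integral>\<^sup>+p. ennreal (max 0 (w p)) * indicator {0..1} p \<partial>lborel) = ennreal (1/(b+1))"
          using W by (simp add: ennreal_max_0)
      next
        show "(\<lambda>p. max 0 (w p)) \<in> borel_measurable borel" using wm by measurable
      qed simp_all
      from order_trans[OF this fin] show ?thesis .
    qed
    show "cond_exp_after_ring N TL TR k (V N \<eta> n k) E \<le> ennreal (2/\<eta> * V N \<eta> n k E)"
    proof (cases "k = 1")
      case True
      have eq: "cond_exp_after_ring N TL TR k (V N \<eta> n k) E =
        (\<integral>\<^sup>+p. indicator {0<..<1} p *
           (\<integral>\<^sup>+ x. ennreal (exponential_density (1/TL) x)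
                    * ennreal (V N \<eta> n k (jump N 1 E p x)) \<partial>lborel) \<partial>lborel)"
        using True by (simp add: cond_exp_after_ring_def)
      show ?thesis unfolding eq
      proof (rule bdry)
        show "0 < 1/TL" using assms by simp
        fix p x :: real and j assume p: "0 < p" "p < 1" and x: "0 \<le> x" and j: "j < n"
        show "p * E (k + j) \<le> jump N 1 E p x (k + j)"
        proof (cases "j = 0")
          case True thus ?thesis unfolding jump1 using \<open>k = 1\<close> p x by (simp add: grow)
        next
          case False
          have "0 < E (k+j)" using Epos j kn k1 by simp
          thus ?thesis unfolding jump1 using \<open>k = 1\<close> p False by (simp add: unch)
        qed
      qed
    next
      case False
      hence k2: "k \<noteq> 1" "k \<noteq> N + 1" using kn n1 by auto
      have eq: "cond_exp_after_ring N TL TR k (V N \<eta> n k) E =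
        (\<integral>\<^sup>+p. indicator {0<..<1} p * ennreal (V N \<eta> n k (jump N k E p 0)) \<partial>lborel)"
        using k2 by (simp add: cond_exp_after_ring_def)
      show ?thesis unfolding eq
      proof (rule inter[OF W2[OF b(1)] wm2, of "\<lambda>p. 1 - p"])
        fix p :: real assume p: "0 < p" "p < 1"
        show "(1 - p) powr b = (1 - p) powr b \<and> 0 < 1 - p" using p by simp
        fix j assume j: "j < n"
        show "(1 - p) * E (k + j) \<le> jump N k E p 0 (k + j)"
        proof (cases "j = 0")
          case True
          have "0 < E (k-1)" using Epos k2 k1 kn by simp
          thus ?thesis using True p k2 by (simp add: jumpI grow)
        next
          case False
          have "0 < E (k+j)" using Epos j kn k1 by simp
          moreover have "k + j \<noteq> k - 1" "k + j \<noteq> k" using False k1 by auto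
          ultimately show ?thesis using p k2 by (simp add: jumpI unch)
        qed
      qed
    qed
    show "cond_exp_after_ring N TL TR (k+n) (V N \<eta> n k) E \<le> ennreal (2/\<eta> * V N \<eta> n k E)"
    proof (cases "k + n = N + 1")
      case True
      have N0: "N \<noteq> 0" using assms by simp
      have eq: "cond_exp_after_ring N TL TR (k+n) (V N \<eta> n k) E =
        (\<integral>\<^sup>+p. indicator {0<..<1} p *
           (\<integral>\<^sup>+ x. ennreal (exponential_density (1/TR) x)
                    * ennreal (V N \<eta> n k (jump N (N+1) E p x)) \<partial>lborel) \<partial>lborel)"
        using True k1 n1 by (simp add: cond_exp_after_ring_def)
      show ?thesis unfolding eq
      proof (rule bdry)
        show "0 < 1/TR" using assms by simp
        fix p x :: real and j assume p: "0 < p" "p < 1" and x: "0 \<le> x" and j: "j < n"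
        show "p * E (k + j) \<le> jump N (N+1) E p x (k + j)"
        proof (cases "k + j = N")
          case True thus ?thesis unfolding jumpR[OF N0] using p x by (simp add: grow)
        next
          case False
          have "0 < E (k+j)" using Epos j kn k1 by simp
          thus ?thesis unfolding jumpR[OF N0] using p False by (simp add: unch)
        qed
      qed
    next
      case False
      hence k2: "k + n \<noteq> 1" "k + n \<noteq> N + 1" using k1 n1 by auto
      have eq: "cond_exp_after_ring N TL TR (k+n) (V N \<eta> n k) E =
        (\<integral>\<^sup>+p. indicator {0<..<1} p * ennreal (V N \<eta> n k (jump N (k+n) E p 0)) \<partial>lborel)"
        using k2 by (simp add: cond_exp_after_ring_def)
      show ?thesis unfolding eq
      proof (rule inter[OF W1[OF b(1)] wm1, of "\<lambda>p. p"])
        fix p :: real assume p: "0 < p" "p < 1"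
        show "p powr b = p powr b \<and> 0 < p" using p by simp
        fix j assume j: "j < n"
        show "p * E (k + j) \<le> jump N (k+n) E p 0 (k + j)"
        proof (cases "k + j = k + n - 1")
          case True
          have "0 < E (k+n)" using Epos k2 k1 kn by simp
          thus ?thesis using True p k2 j by (simp add: jumpI grow)
        next
          case False
          have "0 < E (k+j)" using Epos j kn k1 by simp
          thus ?thesis using p False k2 j by (simp add: jumpI unch)
        qed
      qed
    qed
  qed
qed simp

end
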